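(* Consider the constrained decoding algorithm below, run with a language model $\mathsf{lm}$ and an AST predicate $\varphi$, using a function $\mathsf{realizable}$ that is both over-approximate and consistent, and with a worklist implementing fair enumeration (every string that has been enqueued is eventually dequeued). Then constrained decoding is complete: if there exists a string $\omega^*\in\Sigma^*$ with $\varphi(\mathsf{parse}(\omega^* ))$, the algorithm returns a solution (a string $\omega$ with $\varphi(\mathsf{parse}(\omega))$).
   Context: Let $\Sigma$ be a finite alphabet, $\mathsf{AST}$ a set of abstract syntax trees, and $\mathsf{parse}\colon \Sigma^*\to\mathsf{AST}\cup\{\bot\}$ a parsing function. A semantic constraint is a predicate $\varphi\colon\mathsf{AST}\to\mathrm{bool}$ (taken false on $\bot$). A token vocabulary $\mathcal{T}$ is a set of finite strings over $\Sigma$ such that every string in $\Sigma^*$ is a concatenation of tokens; it contains a distinguished one-character token $\mathsf{END}$. Token sequences are identified with the strings they concatenate to. It is assumed that every string satisfying the constraint contains $\mathsf{END}$ exactly once, as its last character. A language model is a function $\mathsf{lm}\colon\mathcal{T}^*\to\mathcal{T}\to[0,1]$. Constrained decoding algorithm: initialize a worklist (an abstract queue data structure with operations enqueue/dequeue) to contain only the empty string $\epsilon$. While the worklist is nonempty: dequeue a string $\omega$; for each $\tau\in\mathcal{T}$, if $\mathsf{realizable}(\omega\tau,\varphi)$ holds then, if $\tau=\mathsf{END}$, return $\omega\tau$; otherwise enqueue $\omega\tau$ with priority $\mathsf{lm}(\omega,\tau)$. If the worklist becomes empty, return $\bot$. A realizability checker is over-approximate if $\big(\exists\omega'\in\Sigma^*.\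 \varphi(\mathsf{parse}(\omega\omega'))\big)\Rightarrow\mathsf{realizable}(\omega,\varphi)$ for all $\omega$; it is consistent if for every $\omega$ whose last character is $\mathsf{END}$, $\mathsf{realizable}(\omega,\varphi)\Leftrightarrow\varphi(\mathsf{parse}(\omega))$. *)

theory Defs
  imports Complex_Main "HOL-Library.Multiset"
begin

text \<open>Strings over the alphabet 'a are lists. Parsing failure (bottom) is None.
  A semantic constraint is lifted to parse results: false on None.\<close>

definition sat :: "('ast \<Rightarrow> bool) \<Rightarrow> 'ast option \<Rightarrow> bool" where
  "sat phi r = (case r of None \<Rightarrow> False | Some t \<Rightarrow> phi t)"

definition token_vocabulary :: "'a list set \<Rightarrow> 'a \<Rightarrow> bool" where
  "token_vocabulary T END \<longleftrightarrow>
     (\<forall>w. \<exists>ts. set ts \<subseteq> T \<and> concat ts = w) \<and> [END] \<in> T"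

definition over_approximate ::
  "('a list \<Rightarrow> 'ast option) \<Rightarrow> ('ast \<Rightarrow> bool) \<Rightarrow> ('a list \<Rightarrow> bool) \<Rightarrow> bool" where
  "over_approximate parse phi realizable \<longleftrightarrow>
     (\<forall>w. (\<exists>w'. sat phi (parse (w @ w'))) \<longrightarrow> realizable w)"

definition consistent ::
  "('a list \<Rightarrow> 'ast option) \<Rightarrow> ('ast \<Rightarrow> bool) \<Rightarrow> 'a \<Rightarrow> ('a list \<Rightarrow> bool) \<Rightarrow> bool" where
  "consistent parse phi END realizable \<longleftrightarrow>
     (\<forall>w. w \<noteq> [] \<and> last w = END \<longrightarrow> (realizable w \<longleftrightarrow> sat phi (parse w)))"

text \<open>The worklist is modelled abstractly as a
  multiset of entries (string, priority); the initial entry (the empty string) carries no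
  priority (None), entries enqueued for token tau carry Some (lm w tau). Dequeue may pick
  any entry (covering every queue implementation); fairness is a separate hypothesis on runs.\<close>

datatype 'a dstate = Running "('a list \<times> real option) multiset" | Halted "'a list option"

definition expand ::
  "'a list set \<Rightarrow> 'a \<Rightarrow> ('a list \<Rightarrow> bool) \<Rightarrow> ('a list \<Rightarrow> 'a list \<Rightarrow> real) \<Rightarrow> 'a list
     \<Rightarrow> ('a list \<times> real option) multiset" where
  "expand T END realizable lm w =
     image_mset (\<lambda>tau. (w @ tau, Some (lm w tau)))
       (mset_set {tau \<in> T. tau \<noteq> [END] \<and> realizable (w @ tau)})"

inductive dstep ::
  "'a list set \<Rightarrow> 'a \<Rightarrow> ('a list \<Rightarrow> bool) \<Rightarrow> ('a list \<Rightarrow> 'a list \<Rightarrow> real)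
     \<Rightarrow> 'a dstate \<Rightarrow> ('a list \<times> real option) option \<Rightarrow> 'a dstate \<Rightarrow> bool"
  for T END realizable lm where
  empty: "dstep T END realizable lm (Running {#}) None (Halted None)"
| found: "e \<in># W \<Longrightarrow> realizable (fst e @ [END]) \<Longrightarrow>
          dstep T END realizable lm (Running W) (Some e) (Halted (Some (fst e @ [END])))"
| cont: "e \<in># W \<Longrightarrow> \<not> realizable (fst e @ [END]) \<Longrightarrow>
          dstep T END realizable lm (Running W) (Some e)
            (Running (W - {#e#} + expand T END realizable lm (fst e)))"

text \<open>A (possibly infinite) run: s n is the state before iteration n, d n the entry
  dequeued in iteration n. Once halted, the state stays put.\<close>

definition decoding_run ::
  "'a list set \<Rightarrow> 'a \<Rightarrow> ('a list \<Rightarrow> bool) \<Rightarrow> ('a list \<Rightarrow> 'a list \<Rightarrow> real)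
     \<Rightarrow> (nat \<Rightarrow> 'a dstate) \<Rightarrow> (nat \<Rightarrow> ('a list \<times> real option) option) \<Rightarrow> bool" where
  "decoding_run T END realizable lm s d \<longleftrightarrow>
     s 0 = Running {#([], None)#} \<and>
     (\<forall>n. case s n of
            Running W \<Rightarrow> dstep T END realizable lm (s n) (d n) (s (Suc n))
          | Halted r \<Rightarrow> s (Suc n) = s n)"

definition fair_run ::
  "(nat \<Rightarrow> 'a dstate) \<Rightarrow> (nat \<Rightarrow> ('a list \<times> real option) option) \<Rightarrow> bool" where
  "fair_run s d \<longleftrightarrow>
     (\<forall>n W e. s n = Running W \<and> e \<in># W \<longrightarrow>
        (\<exists>m\<ge>n. (\<exists>W'. s m = Running W') \<and> d m = Some e) \<or> (\<exists>m r. s m = Halted r))"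

end

theory Submission
  imports Defs
begin

lemma expand_mem:
  assumes "finite T" "tau \<in> T" "tau \<noteq> [END]" "realizable (w @ tau)"
  shows "(w @ tau, Some (lm w tau)) \<in># expand T END realizable lm w"
  using assms by (auto simp: expand_def)

theorem mainTheorem2:
  fixes T :: "('a::finite) list set" and END :: 'a
    and parse :: "'a list \<Rightarrow> 'ast option" and phi :: "'ast \<Rightarrow> bool"
    and lm :: "'a list \<Rightarrow> 'a list \<Rightarrow> real" and realizable :: "'a list \<Rightarrow> bool"
    and s :: "nat \<Rightarrow> 'a dstate" and d :: "nat \<Rightarrow> ('a list \<times> real option) option"
  assumes vocab: "token_vocabulary T END"
    and finT: "finite T"
    and lm_range: "\<forall>w tau. 0 \<le> lm w tau \<and> lm w tau \<le> 1"
    and end_last: "\<forall>w. sat phi (parse w) \<longrightarrow> (\<exists>w0. w = w0 @ [END] \<and> END \<notin> set w0)"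
    and over: "over_approximate parse phi realizable"
    and cons: "consistent parse phi END realizable"
    and run: "decoding_run T END realizable lm s d"
    and fair: "fair_run s d"
    and ex: "\<exists>wstar. sat phi (parse wstar)"
  shows "\<exists>n w. s n = Halted (Some w) \<and> sat phi (parse w)"
proof (rule ccontr)
  assume nh: "\<not> ?thesis"
  obtain wstar where ws: "sat phi (parse wstar)" using ex by blast
  obtain w0 where w0: "wstar = w0 @ [END]" "END \<notin> set w0" using end_last ws by blast
  obtain ts where ts: "set ts \<subseteq> T" "concat ts = w0" using vocab unfolding token_vocabulary_def by blast
  define P where "P k = concat (take k ts)" for k
  have Psuc: "P (Suc k) = P k @ ts ! k" if "k < length ts" for k
    using that by (simp add: P_def take_Suc_conv_app_nth)
  have Pdrop: "P k @ concat (drop k ts) = w0" for k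
    unfolding P_def using ts(2) by (metis append_take_drop_id concat_append)
  have tsT: "ts ! k \<in> T" if "k < length ts" for k using that ts(1) by auto
  have tsE: "ts ! k \<noteq> [END]" if "k < length ts" for k
  proof
    assume "ts ! k = [END]"
    then have "END \<in> set (concat ts)" using that by (metis list.set_intros(1) nth_mem set_concat UN_I)
    then show False using ts(2) w0(2) by simp
  qed
  have realk: "realizable (P k @ ts ! k)" if "k < length ts" for k
  proof -
    have "P k @ ts ! k @ concat (drop (Suc k) ts) @ [END] = wstar"
      using Pdrop[of "Suc k"] Psuc[OF that] w0(1) by simp
    then show ?thesis using over ws unfolding over_approximate_def
      by (metis append.assoc)
  qed
  have realw0: "realizable (w0 @ [END])"
    using over ws w0(1) unfolding over_approximate_def by (metis append_Nil2)
  have Plen: "P (length ts) = w0" using ts(2) by (simp add: P_def)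
  have s0: "s 0 = Running {#([], None)#}" and sstep: "\<And>n. (case s n of
            Running W \<Rightarrow> dstep T END realizable lm (s n) (d n) (s (Suc n))
          | Halted r \<Rightarrow> s (Suc n) = s n)"
    using run unfolding decoding_run_def by auto
  define I where "I W = (\<exists>k\<le>length ts. \<exists>pr. (P k, pr) \<in># W)" for W :: "('a list \<times> real option) multiset"
  have found_sat: "sat phi (parse (fst e @ [END]))" if "realizable (fst e @ [END])" for e :: "'a list \<times> real option"
    using cons that unfolding consistent_def by auto
  have inv: "(\<exists>W. s n = Running W \<and> I W) \<or> (\<exists>w. s n = Halted (Some w) \<and> sat phi (parse w))" for n
  proof (induction n)
    case 0
    show ?case using s0 by (auto simp: I_def P_def intro!: exI[of _ 0])
  next
    case (Suc n)
    then show ?case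
    proof
      assume "\<exists>W. s n = Running W \<and> I W"
      then obtain W where W: "s n = Running W" "I W" by blast
      then obtain k pr where k: "k \<le> length ts" "(P k, pr) \<in># W" unfolding I_def by blast
      have st: "dstep T END realizable lm (Running W) (d n) (s (Suc n))" using sstep[of n] W(1) by simp
      then show ?case
      proof cases
        case empty then show ?thesis using k by simp
      next
        case (found e) then show ?thesis using found_sat by auto
      next
        case (cont e)
        show ?thesis
        proof (cases "e = (P k, pr)")
          case True
          have "k < length ts"
          proof (rule ccontr)
            assume "\<not> k < length ts"
            then have "k = length ts" using k by simp
            then show False using cont True Plen realw0 by simp
          qed
          then have "(P (Suc k), Some (lm (P k) (ts ! k))) \<in># expand T END realizable lm (fst e)"
            using expand_mem[of T "ts ! k" END realizable "P k" lm, OF finT tsT[OF \<open>k < length ts\<close>] tsE[OF \<open>k < length ts\<close>] realk[OF \<open>k < length ts\<close>]] True Psuc[OF \<open>k < length ts\<close>] by auto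
          then have "(P (Suc k), Some (lm (P k) (ts ! k))) \<in># W - {#e#} + expand T END realizable lm (fst e)"
            by simp
          then have "I (W - {#e#} + expand T END realizable lm (fst e))"
            unfolding I_def using \<open>k < length ts\<close> by (intro exI[of _ "Suc k"]) auto
          then show ?thesis using cont by auto
        next
          case False
          then have "(P k, pr) \<in># W - {#e#}" using k(2) by (simp add: in_diff_count)
          then have "(P k, pr) \<in># W - {#e#} + expand T END realizable lm (fst e)" by simp
          then have "I (W - {#e#} + expand T END realizable lm (fst e))"
            unfolding I_def using k(1) by blast
          then show ?thesis using cont by auto
        qed
      qed
    next
      assume "\<exists>w. s n = Halted (Some w) \<and> sat phi (parse w)"
      then show ?case using sstep[of n] by auto
    qed
  qed
  have allrun: "\<exists>W. s n = Running W" for n using inv[of n] nh by auto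
  have reach: "\<exists>n W pr. s n = Running W \<and> (P k, pr) \<in># W" if "k \<le> length ts" for k
    using that
  proof (induction k)
    case 0
    show ?case using s0 by (intro exI[of _ 0] exI[of _ "{#([], None)#}"] exI[of _ None]) (simp add: P_def)
  next
    case (Suc k)
    then obtain n W pr where nW: "s n = Running W" "(P k, pr) \<in># W" by auto
    obtain m W' where m: "s m = Running W'" "d m = Some (P k, pr)"
      using fair nW allrun unfolding fair_run_def by (metis dstate.distinct(1))
    have st: "dstep T END realizable lm (Running W') (Some (P k, pr)) (s (Suc m))"
      using sstep[of m] m by simp
    have kl: "k < length ts" using Suc.prems by simp
    show ?case using st
    proof cases
      case found then show ?thesis using allrun[of "Suc m"] by auto
    next
      case cont
      have "(P (Suc k), Some (lm (P k) (ts ! k))) \<in># expand T END realizable lm (P k)"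
        using expand_mem[of T "ts ! k" END realizable "P k" lm, OF finT tsT[OF kl] tsE[OF kl] realk[OF kl]] Psuc[OF kl] by simp
      then have "(P (Suc k), Some (lm (P k) (ts ! k))) \<in># W' - {#(P k, pr)#} + expand T END realizable lm (P k)" by simp
      then show ?thesis using cont by (intro exI[of _ "Suc m"]) auto
    qed
  qed
  obtain n W pr where nW: "s n = Running W" "(P (length ts), pr) \<in># W" using reach[of "length ts"] by auto
  obtain m W' where m: "s m = Running W'" "d m = Some (P (length ts), pr)"
    using fair nW allrun unfolding fair_run_def by (metis dstate.distinct(1))
  have st: "dstep T END realizable lm (Running W') (Some (P (length ts), pr)) (s (Suc m))"
    using sstep[of m] m by simp
  then show False
  proof cases
    case found then show ?thesis using allrun[of "Suc m"] by auto
  next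
    case cont then show ?thesis using Plen realw0 by simp
  qed
qed

end
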